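(* The map $a\mapsto(a,\,a\bar a^* )$ induces an isomorphism of algebraic groups over $\mathbf Q$ $$E_0^\times/F^\times\;\xrightarrow{\ \sim\ }\;H_{\mathbf z}.$$
   Context: $D_0$ is a definite quaternion algebra over $\mathbf Q$ with main involution $*$; $F=\mathbf Q(\sqrt{d_F})$ is a quadratic étale algebra ($d_F$ a square-free positive integer, with $d_F=1$ meaning $F=\mathbf Q\oplus\mathbf Q$) with nontrivial automorphism $x\mapsto\bar x$; $D=D_0\otimes_{\mathbf Q}F$ with $*$ and $\bar{\ }$ extended; $V=\{x\in D:\bar x^*=x\}$; $H(\mathbf Q)=(D^\times\times\mathbf Q^\times)/\{(a,N_{F/\mathbf Q}(a)):a\in F^\times\}$ acts on $V$ by $\varrho(a,\alpha)x=\alpha^{-1}ax\bar a^*$, with similitude $\nu=\alpha^{-2}N_{F/\mathbf Q}(aa^* )$, and $H^{(1)}=\ker\nu$. $M=\mathbf Q(\sqrt{-d_M})$ is an imaginary quadratic field ($d_M$ square-free positive) with an embedding $\iota:M\hookrightarrow D_0$. $K=\mathbf Q(\sqrt{-d_Md_F})$, embedded in $V$ by $\iota(\sqrt{-d_Md_F})=\iota(\sqrt{-d_M})\otimes\sqrt{d_F}$. With $-d_K$ the square-free integer such that $K=\mathbf Q(\sqrt{-d_K})$, put $\delta=\sqrt{-d_K}$ if $-d_K\not\equiv1\pmod 4$ and $\delta=\frac{1+\sqrt{-d_K}}{2}$ otherwise; $\mathbf z=(1,\iota(\delta))\in V\oplus V$. $E=F\cdot\iota(M)\subset D$ (the subalgebra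 generated by $F$ and $\iota(M)$), $N_{E/K}(a)=a\bar a^*$, $E_0=\{a\in E:a\bar a^*\in\mathbf Q\}$ (as an algebraic group, $E_0^\times$ is the group of units $a$ of $E$ with $a\bar a^*$ in $\mathbf G_m$), and $H_{\mathbf z}=\{h\in H^{(1)}:\varrho(h)\mathbf z=\mathbf z\}$ with $\varrho$ acting componentwise. *)

theory Defs
  imports Complex_Main "HOL-Algebra.Coset" "HOL-Computational_Algebra.Squarefree"
begin

section \<open>Quaternion algebra (A,B)_k with basis 1, i, j, ij; i^2 = A, j^2 = B, ij = -ji\<close>

datatype 'k quat = Q 'k 'k 'k 'k

fun qmul :: "'k::comm_ring_1 \<Rightarrow> 'k \<Rightarrow> 'k quat \<Rightarrow> 'k quat \<Rightarrow> 'k quat" where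
  "qmul A B (Q x0 x1 x2 x3) (Q y0 y1 y2 y3) =
     Q (x0*y0 + A*x1*y1 + B*x2*y2 - A*B*x3*y3)
       (x0*y1 + x1*y0 - B*x2*y3 + B*x3*y2)
       (x0*y2 + x2*y0 + A*x1*y3 - A*x3*y1)
       (x0*y3 + x3*y0 + x1*y2 - x2*y1)"

fun qadd :: "'k::comm_ring_1 quat \<Rightarrow> 'k quat \<Rightarrow> 'k quat" where
  "qadd (Q x0 x1 x2 x3) (Q y0 y1 y2 y3) = Q (x0+y0) (x1+y1) (x2+y2) (x3+y3)"

fun qsmul :: "'k::comm_ring_1 \<Rightarrow> 'k quat \<Rightarrow> 'k quat" where
  "qsmul c (Q x0 x1 x2 x3) = Q (c*x0) (c*x1) (c*x2) (c*x3)"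

fun qconj :: "'k::comm_ring_1 quat \<Rightarrow> 'k quat" where
  "qconj (Q x0 x1 x2 x3) = Q x0 (-x1) (-x2) (-x3)"

definition qscal :: "'k::comm_ring_1 \<Rightarrow> 'k quat" where
  "qscal c = Q c 0 0 0"

fun qcoef0 :: "'k quat \<Rightarrow> 'k" where
  "qcoef0 (Q x0 x1 x2 x3) = x0"

fun qmap :: "rat quat \<Rightarrow> 'k::field_char_0 quat" where
  "qmap (Q x0 x1 x2 x3) = Q (of_rat x0) (of_rat x1) (of_rat x2) (of_rat x3)"

section \<open>D = D_0 \<otimes> F over k: pairs (p,q) standing for p + q s, s = sqrt d_F central\<close>

type_synonym 'k delt = "'k quat \<times> 'k quat"

fun dmul :: "'k::comm_ring_1 \<Rightarrow> 'k \<Rightarrow> 'k \<Rightarrow> 'k delt \<Rightarrow> 'k delt \<Rightarrow> 'k delt" where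
  "dmul A B dF (p1, q1) (p2, q2) =
     (qadd (qmul A B p1 p2) (qsmul dF (qmul A B q1 q2)),
      qadd (qmul A B p1 q2) (qmul A B q1 p2))"

definition done_D :: "'k::comm_ring_1 delt" where
  "done_D = (qscal 1, qscal 0)"

text \<open>the involution * (extended F-linearly) and the automorphism bar (extended D_0-linearly)\<close>
fun dstar :: "'k::comm_ring_1 delt \<Rightarrow> 'k delt" where
  "dstar (p, q) = (qconj p, qconj q)"

fun dbar :: "'k::comm_ring_1 delt \<Rightarrow> 'k delt" where
  "dbar (p, q) = (p, qsmul (-1) q)"

fun dsmul :: "'k::comm_ring_1 \<Rightarrow> 'k delt \<Rightarrow> 'k delt" where
  "dsmul c (p, q) = (qsmul c p, qsmul c q)"

text \<open>the element x + y s of F \<otimes> k, viewed inside D \<otimes> k\<close>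
definition felt :: "'k::comm_ring_1 \<Rightarrow> 'k \<Rightarrow> 'k delt" where
  "felt x y = (qscal x, qscal y)"

text \<open>N_{F/Q} of an element of D lying in F \<otimes> k (read off its F-coordinates)\<close>
fun fnorm :: "'k::comm_ring_1 \<Rightarrow> 'k delt \<Rightarrow> 'k" where
  "fnorm dF (p, q) = (qcoef0 p)^2 - dF * (qcoef0 q)^2"

section \<open>k-points of the groups, for a field k of characteristic 0\<close>

text \<open>Parameters: A, B :: rat with D_0 = (A,B)_Q; dF; dM; mu :: rat quat = iota(sqrt(-dM)).\<close>

definition Dunits :: "rat \<Rightarrow> rat \<Rightarrow> nat \<Rightarrow> 'k::field_char_0 delt set" where
  "Dunits A B dF = {x. \<exists>y. dmul (of_rat A) (of_rat B) (of_nat dF) x y = done_D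
                          \<and> dmul (of_rat A) (of_rat B) (of_nat dF) y x = done_D}"

definition Dgrp :: "rat \<Rightarrow> rat \<Rightarrow> nat \<Rightarrow> 'k::field_char_0 delt monoid" where
  "Dgrp A B dF = \<lparr>carrier = Dunits A B dF,
                  monoid.mult = dmul (of_rat A) (of_rat B) (of_nat dF), monoid.one = done_D\<rparr>"

definition Gm :: "'k::field_char_0 monoid" where
  "Gm = \<lparr>carrier = {x. x \<noteq> 0}, monoid.mult = (*), monoid.one = 1\<rparr>"

definition Funits :: "nat \<Rightarrow> 'k::field_char_0 delt set" where
  "Funits dF = {felt x y | x y. x^2 - of_nat dF * y^2 \<noteq> 0}"

definition Hsub :: "nat \<Rightarrow> ('k::field_char_0 delt \<times> 'k) set" where
  "Hsub dF = {(felt x y, x^2 - of_nat dF * y^2) | x y. x^2 - of_nat dF * y^2 \<noteq> 0}"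

definition Hpre :: "rat \<Rightarrow> rat \<Rightarrow> nat \<Rightarrow> ('k::field_char_0 delt \<times> 'k) monoid" where
  "Hpre A B dF = Dgrp A B dF \<times>\<times> Gm"

definition Hgrp :: "rat \<Rightarrow> rat \<Rightarrow> nat \<Rightarrow> ('k::field_char_0 delt \<times> 'k) set monoid" where
  "Hgrp A B dF = Hpre A B dF Mod Hsub dF"

fun rho :: "rat \<Rightarrow> rat \<Rightarrow> nat \<Rightarrow> 'k::field_char_0 delt \<times> 'k \<Rightarrow> 'k delt \<Rightarrow> 'k delt" where
  "rho A B dF (a, \<alpha>) x =
     dsmul (inverse \<alpha>) (dmul (of_rat A) (of_rat B) (of_nat dF) a
        (dmul (of_rat A) (of_rat B) (of_nat dF) x (dstar (dbar a))))"

fun nu :: "rat \<Rightarrow> rat \<Rightarrow> nat \<Rightarrow> 'k::field_char_0 delt \<times> 'k \<Rightarrow> 'k" where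
  "nu A B dF (a, \<alpha>) =
     fnorm (of_nat dF) (dmul (of_rat A) (of_rat B) (of_nat dF) a (dstar a)) / \<alpha>^2"

text \<open>d_K: -d_K is the square-free part of -d_M d_F\<close>
definition gK :: "nat \<Rightarrow> nat \<Rightarrow> nat" where
  "gK dM dF = gcd dM dF"

definition dK :: "nat \<Rightarrow> nat \<Rightarrow> nat" where
  "dK dM dF = dM * dF div (gK dM dF)^2"

text \<open>iota(delta) in V, where iota(sqrt(-d_M d_F)) = iota(sqrt(-d_M)) \<otimes> sqrt(d_F) = (0, mu)
  and sqrt(-d_K) = sqrt(-d_M d_F) / gK\<close>
definition iota_delta :: "nat \<Rightarrow> nat \<Rightarrow> rat quat \<Rightarrow> 'k::field_char_0 delt" where
  "iota_delta dM dF mu =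
     (let s = (qscal 0, qsmul (inverse (of_nat (gK dM dF))) (qmap mu)) in
      if (- int (dK dM dF)) mod 4 = 1
      then (qadd (qscal (1/2)) (fst s), qsmul (1/2) (snd s))
      else s)"

text \<open>H_z(k): classes in H^{(1)}(k) fixing z = (1, iota(delta)) (rho and nu are constant on classes)\<close>
definition Hz :: "rat \<Rightarrow> rat \<Rightarrow> nat \<Rightarrow> nat \<Rightarrow> rat quat \<Rightarrow> ('k::field_char_0 delt \<times> 'k) set set" where
  "Hz A B dF dM mu = {C \<in> carrier (Hgrp A B dF).
      \<forall>h\<in>C. nu A B dF h = 1 \<and> rho A B dF h done_D = done_D
             \<and> rho A B dF h (iota_delta dM dF mu) = iota_delta dM dF mu}"

definition Hzgrp :: "rat \<Rightarrow> rat \<Rightarrow> nat \<Rightarrow> nat \<Rightarrow> rat quat \<Rightarrow> ('k::field_char_0 delt \<times> 'k) set monoid" where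
  "Hzgrp A B dF dM mu = (Hgrp A B dF) \<lparr>carrier := Hz A B dF dM mu\<rparr>"

text \<open>E(k) = F \<cdot> iota(M) \<otimes> k = {(x + y mu) + (z + w mu) s}\<close>
definition Eset :: "nat \<Rightarrow> rat quat \<Rightarrow> 'k::field_char_0 delt set" where
  "Eset dF mu = {(qadd (qscal x) (qsmul y (qmap mu)), qadd (qscal z) (qsmul w (qmap mu))) | x y z w. True}"

text \<open>a (bar a)^* = N_{E/K}(a)\<close>
definition NEK :: "rat \<Rightarrow> rat \<Rightarrow> nat \<Rightarrow> 'k::field_char_0 delt \<Rightarrow> 'k delt" where
  "NEK A B dF e = dmul (of_rat A) (of_rat B) (of_nat dF) e (dstar (dbar e))"

definition E0units :: "rat \<Rightarrow> rat \<Rightarrow> nat \<Rightarrow> rat quat \<Rightarrow> 'k::field_char_0 delt set" where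
  "E0units A B dF mu = {e \<in> Eset dF mu.
      (\<exists>e' \<in> Eset dF mu. dmul (of_rat A) (of_rat B) (of_nat dF) e e' = done_D
                        \<and> dmul (of_rat A) (of_rat B) (of_nat dF) e' e = done_D)
      \<and> (\<exists>t. t \<noteq> 0 \<and> NEK A B dF e = felt t 0)}"

definition E0grp :: "rat \<Rightarrow> rat \<Rightarrow> nat \<Rightarrow> rat quat \<Rightarrow> 'k::field_char_0 delt monoid" where
  "E0grp A B dF mu = \<lparr>carrier = E0units A B dF mu,
                      monoid.mult = dmul (of_rat A) (of_rat B) (of_nat dF), monoid.one = done_D\<rparr>"

definition phiH :: "rat \<Rightarrow> rat \<Rightarrow> nat \<Rightarrow> 'k::field_char_0 delt \<Rightarrow> ('k delt \<times> 'k) set" where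
  "phiH A B dF e = Hsub dF #>\<^bsub>Hpre A B dF\<^esub> (e, qcoef0 (fst (NEK A B dF e)))"

end

theory Submission
  imports Defs
begin



lemma delt_cases: obtains x0 x1 x2 x3 y0 y1 y2 y3 where "x = (Q x0 x1 x2 x3, Q y0 y1 y2 y3)"
  by (metis quat.exhaust surj_pair)

lemma dmul_assoc:
  fixes a b d :: "'k::comm_ring_1"
  shows "dmul a b d (dmul a b d x y) z = dmul a b d x (dmul a b d y z)"
  by (rule delt_cases[of x], rule delt_cases[of y], rule delt_cases[of z])
     (simp add: algebra_simps)

lemma dmul_one: "dmul a b d done_D x = x" "dmul a b d x done_D = x"
  by (rule delt_cases[of x], simp add: done_D_def qscal_def)+

lemma dstar_mult: "dstar (dmul a b d x y) = dmul a b d (dstar y) (dstar x)"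
  by (rule delt_cases[of x], rule delt_cases[of y]) (simp add: algebra_simps)

lemma dbar_mult: "dbar (dmul a b d x y) = dmul a b d (dbar x) (dbar y)"
  by (rule delt_cases[of x], rule delt_cases[of y]) (simp add: algebra_simps)

lemma dsmul_mult1: "dmul a b d (dsmul c x) y = dsmul c (dmul a b d x y)"
  by (rule delt_cases[of x], rule delt_cases[of y]) (simp add: algebra_simps)

lemma dsmul_mult2: "dmul a b d x (dsmul c y) = dsmul c (dmul a b d x y)"
  by (rule delt_cases[of x], rule delt_cases[of y]) (simp add: algebra_simps)

lemma dsmul_dsmul: "dsmul c (dsmul c' x) = dsmul (c*c') x"
  by (rule delt_cases[of x]) (simp add: algebra_simps)

lemma dsmul_1: "dsmul 1 x = x"
  by (rule delt_cases[of x]) simp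

lemma felt_central: "dmul a b d (felt u v) x = dmul a b d x (felt u v)"
  by (rule delt_cases[of x]) (simp add: felt_def qscal_def algebra_simps)

lemma felt0_mult: "dmul a b d (felt u 0) x = dsmul u x"
  by (rule delt_cases[of x]) (simp add: felt_def qscal_def algebra_simps)

lemma felt_mult: "dmul a b d (felt u v) (felt u' v') = felt (u*u' + d*v*v') (u*v'+v*u')"
  by (simp add: felt_def qscal_def algebra_simps)




definition emk :: "'k::comm_ring_1 quat \<Rightarrow> 'k \<Rightarrow> 'k \<Rightarrow> 'k \<Rightarrow> 'k \<Rightarrow> 'k delt" where
  "emk mu x y z w = (qadd (qscal x) (qsmul y mu), qadd (qscal z) (qsmul w mu))"

lemma emk_Q: "emk (Q 0 m1 m2 m3) x y z w = (Q x (y*m1) (y*m2) (y*m3), Q z (w*m1) (w*m2) (w*m3))"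
  by (simp add: emk_def qscal_def)

lemma emk_mult:
  fixes a b d m :: "'k::comm_ring_1"
  assumes R: "a*m1^2 + b*m2^2 - a*b*m3^2 = -m"
  shows "dmul a b d (emk (Q 0 m1 m2 m3) x y z w) (emk (Q 0 m1 m2 m3) x' y' z' w') =
     emk (Q 0 m1 m2 m3) (x*x' - m*y*y' + d*(z*z' - m*w*w')) (x*y'+y*x' + d*(z*w'+w*z'))
        (x*z' + z*x' - m*(y*w'+w*y')) (x*w'+y*z'+z*y'+w*x')"
proof -
  have m: "m = -(a*m1^2 + b*m2^2 - a*b*m3^2)" using R by (simp add: algebra_simps)
  show ?thesis unfolding emk_Q m by (simp add: algebra_simps power2_eq_square)
qed

lemma emk_comm:
  fixes a b d m :: "'k::comm_ring_1"
  assumes R: "a*m1^2 + b*m2^2 - a*b*m3^2 = -m"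
  shows "dmul a b d (emk (Q 0 m1 m2 m3) x y z w) (emk (Q 0 m1 m2 m3) x' y' z' w') =
         dmul a b d (emk (Q 0 m1 m2 m3) x' y' z' w') (emk (Q 0 m1 m2 m3) x y z w)"
  unfolding emk_mult[OF R] by (simp add: algebra_simps)

lemma emk_inj:
  fixes m1 m2 m3 :: "'k::field"
  assumes "\<not> (m1 = 0 \<and> m2 = 0 \<and> m3 = 0)"
  shows "emk (Q 0 m1 m2 m3) x y z w = emk (Q 0 m1 m2 m3) x' y' z' w' \<longleftrightarrow> x = x' \<and> y = y' \<and> z = z' \<and> w = w'"
  using assms by (auto simp: emk_Q)

lemma dstar_emk: "dstar (emk (Q 0 m1 m2 m3) x y z w) = emk (Q 0 m1 m2 m3) x (-y) z (-w)"
  by (simp add: emk_Q)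
lemma dbar_emk: "dbar (emk (Q 0 m1 m2 m3) x y z w) = emk (Q 0 m1 m2 m3) x y (-z) (-w)"
  by (simp add: emk_Q)
lemma dsmul_emk: "dsmul c (emk (Q 0 m1 m2 m3) x y z w) = emk (Q 0 m1 m2 m3) (c*x) (c*y) (c*z) (c*w)"
  by (simp add: emk_Q algebra_simps)
lemma felt_emk: "felt u v = emk (Q 0 m1 m2 m3) u 0 v 0"
  by (simp add: emk_Q felt_def qscal_def)
lemma done_emk: "done_D = emk (Q 0 m1 m2 m3) 1 0 0 0"
  by (simp add: emk_Q done_D_def qscal_def)
lemma fnorm_emk: "fnorm d (emk (Q 0 m1 m2 m3) x y z w) = x^2 - d*z^2"
  by (simp add: emk_Q)
lemma felt_eq[simp]: "felt x y = felt x' y' \<longleftrightarrow> x = x' \<and> y = y'"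
  by (simp add: felt_def qscal_def)
lemma dsmul_felt: "dsmul c (felt u v) = felt (c*u) (c*v)"
  by (simp add: felt_def qscal_def)
lemma dsmul_done: "dsmul c done_D = felt c 0"
  by (simp add: felt_def done_D_def qscal_def)

lemma NEK_emk:
  fixes a b d m :: "'k::comm_ring_1"
  assumes R: "a*m1^2 + b*m2^2 - a*b*m3^2 = -m"
  shows "dmul a b d (emk (Q 0 m1 m2 m3) x y z w) (dstar (dbar (emk (Q 0 m1 m2 m3) x y z w)))
     = emk (Q 0 m1 m2 m3) (x^2 + m*y^2 - d*(z^2+m*w^2)) 0 0 (2*(x*w-y*z))"
  unfolding dbar_emk dstar_emk emk_mult[OF R] by (simp add: algebra_simps power2_eq_square)

lemma fnorm_star_emk:
  fixes a b d m :: "'k::comm_ring_1"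
  assumes R: "a*m1^2 + b*m2^2 - a*b*m3^2 = -m"
  shows "fnorm d (dmul a b d (emk (Q 0 m1 m2 m3) x y z w) (dstar (emk (Q 0 m1 m2 m3) x y z w)))
     = (x^2 + m*y^2 - d*(z^2+m*w^2))^2 + 4*d*m*(x*w-y*z)^2"
  unfolding dstar_emk emk_mult[OF R] fnorm_emk by (simp add: algebra_simps power2_eq_square)

lemma parallel:
  fixes m1 m2 m3 :: "'k::field"
  assumes "\<not> (m1 = 0 \<and> m2 = 0 \<and> m3 = 0)"
    and "m2 * p3 = m3 * p2" "m3 * p1 = m1 * p3" "m2 * p1 = m1 * p2"
  shows "\<exists>y. p1 = y*m1 \<and> p2 = y*m2 \<and> p3 = y*m3"
proof -
  { assume "m1 \<noteq> 0"
    then have ?thesis using assms by (intro exI[of _ "p1/m1"]) (auto simp: field_simps) }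
  moreover
  { assume "m2 \<noteq> 0"
    then have ?thesis using assms by (intro exI[of _ "p2/m2"]) (auto simp: field_simps) }
  moreover
  { assume "m3 \<noteq> 0"
    then have ?thesis using assms by (intro exI[of _ "p3/m3"]) (auto simp: field_simps) }
  ultimately show ?thesis using assms(1) by blast
qed

lemma centr:
  fixes a b d c c' :: "'k::field_char_0"
  assumes "a \<noteq> 0" "b \<noteq> 0" "d \<noteq> 0" "c' \<noteq> 0" "\<not> (m1 = 0 \<and> m2 = 0 \<and> m3 = 0)"
   and "dmul a b d x (emk (Q 0 m1 m2 m3) c 0 0 c') = dmul a b d (emk (Q 0 m1 m2 m3) c 0 0 c') x"
  shows "\<exists>x0 y0 z0 w0. x = emk (Q 0 m1 m2 m3) x0 y0 z0 w0"
proof -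
  obtain p0 p1 p2 p3 q0 q1 q2 q3 where x: "x = (Q p0 p1 p2 p3, Q q0 q1 q2 q3)" by (rule delt_cases)
  have e: "m2 * q3 = m3 * q2 \<and> m3 * q1 = m1 * q3 \<and> m2 * q1 = m1 * q2 \<and>
      m2 * p3 = m3 * p2 \<and> m3 * p1 = m1 * p3 \<and> m2 * p1 = m1 * p2"
    using assms(1-4,6) unfolding x by (simp add: emk_Q algebra_simps)
  obtain y where y: "p1 = y*m1 \<and> p2 = y*m2 \<and> p3 = y*m3" using parallel[OF assms(5)] e by blast
  obtain w where w: "q1 = w*m1 \<and> q2 = w*m2 \<and> q3 = w*m3" using parallel[OF assms(5)] e by blast
  show ?thesis using x y w by (intro exI[of _ p0] exI[of _ y] exI[of _ q0] exI[of _ w]) (simp add: emk_Q)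
qed




lemma NEK_mult_scal:
  fixes a b d :: "'k::comm_ring_1"
  assumes "dmul a b d y (dstar (dbar y)) = felt s 0"
  shows "dmul a b d (dmul a b d x y) (dstar (dbar (dmul a b d x y))) = dsmul s (dmul a b d x (dstar (dbar x)))"
proof -
  have "dmul a b d (dmul a b d x y) (dstar (dbar (dmul a b d x y)))
      = dmul a b d x (dmul a b d (dmul a b d y (dstar (dbar y))) (dstar (dbar x)))"
    by (simp add: dbar_mult dstar_mult dmul_assoc)
  also have "\<dots> = dsmul s (dmul a b d x (dstar (dbar x)))"
    unfolding assms felt0_mult dsmul_mult1 dsmul_mult2 ..
  finally show ?thesis .
qed

lemma Dunits_I: "dmul (of_rat A) (of_rat B) (of_nat dF) x y = done_D \<Longrightarrow> dmul (of_rat A) (of_rat B) (of_nat dF) y x = done_D \<Longrightarrow> x \<in> Dunits A B dF"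
  unfolding Dunits_def by blast

lemma Hsub_I: "x^2 - of_nat dF * y^2 \<noteq> 0 \<Longrightarrow> (felt x y, x^2 - of_nat dF * y^2) \<in> Hsub dF"
  unfolding Hsub_def by blast

lemma group_Dgrp: "group (Dgrp A B dF :: 'k::field_char_0 delt monoid)"
proof (rule groupI)
  let ?M = "dmul (of_rat A) (of_rat B) (of_nat dF) :: 'k delt \<Rightarrow> _"
  fix x y assume "x \<in> carrier (Dgrp A B dF :: 'k delt monoid)" "y \<in> carrier (Dgrp A B dF :: 'k delt monoid)"
  then obtain x' y' where x: "?M x x' = done_D" "?M x' x = done_D" and y: "?M y y' = done_D" "?M y' y = done_D"
    by (auto simp: Dgrp_def Dunits_def)
  have "?M (?M x y) (?M y' x') = done_D" by (simp add: dmul_assoc[symmetric] x y) (simp add: dmul_assoc x y dmul_one)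
  moreover have "?M (?M y' x') (?M x y) = done_D" by (simp add: dmul_assoc[symmetric] x y) (simp add: dmul_assoc x y dmul_one)
  ultimately have "?M x y \<in> Dunits A B dF" unfolding Dunits_def by blast
  then show "x \<otimes>\<^bsub>Dgrp A B dF\<^esub> y \<in> carrier (Dgrp A B dF)" by (simp add: Dgrp_def)
next
  show "\<one>\<^bsub>Dgrp A B dF\<^esub> \<in> carrier (Dgrp A B dF :: 'k delt monoid)"
    using Dunits_I[of A B dF done_D done_D] by (simp add: Dgrp_def dmul_one)
next
  fix x y z assume "x \<in> carrier (Dgrp A B dF :: 'k delt monoid)"
  then show "x \<otimes>\<^bsub>Dgrp A B dF\<^esub> y \<otimes>\<^bsub>Dgrp A B dF\<^esub> z = x \<otimes>\<^bsub>Dgrp A B dF\<^esub> (y \<otimes>\<^bsub>Dgrp A B dF\<^esub> z)"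
    by (simp add: Dgrp_def dmul_assoc)
next
  fix x assume "x \<in> carrier (Dgrp A B dF :: 'k delt monoid)"
  then show "\<one>\<^bsub>Dgrp A B dF\<^esub> \<otimes>\<^bsub>Dgrp A B dF\<^esub> x = x" by (simp add: Dgrp_def dmul_one)
next
  fix x assume "x \<in> carrier (Dgrp A B dF :: 'k delt monoid)"
  then obtain x' where x: "dmul (of_rat A) (of_rat B) (of_nat dF) x x' = done_D" "dmul (of_rat A) (of_rat B) (of_nat dF) x' x = done_D"
    by (auto simp: Dgrp_def Dunits_def)
  have "x' \<in> Dunits A B dF" using x by (intro Dunits_I)
  then show "\<exists>y\<in>carrier (Dgrp A B dF). y \<otimes>\<^bsub>Dgrp A B dF\<^esub> x = \<one>\<^bsub>Dgrp A B dF\<^esub>"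
    using x by (auto simp: Dgrp_def)
qed

lemma group_Gm: "group (Gm :: 'k::field_char_0 monoid)"
  by (rule groupI) (auto simp: Gm_def, metis left_inverse inverse_nonzero_iff_nonzero)

lemma group_Hpre: "group (Hpre A B dF :: ('k::field_char_0 delt \<times> 'k) monoid)"
  unfolding Hpre_def by (rule DirProd_group[OF group_Dgrp group_Gm])

lemma felt_unit_gen:
  fixes d :: "'k::field"
  assumes "x^2 - d * y^2 = n" "n \<noteq> 0"
  shows "dmul a b d (felt (x/n) (-y/n)) (felt x y) = done_D"
        "dmul a b d (felt x y) (felt (x/n) (-y/n)) = done_D"
proof -
  have 1: "x/n*x + d*(-y/n)*y = 1" "x * (x/n) + d*y*(-y/n) = 1"
    using assms by (auto simp: field_simps power2_eq_square)
  have 2: "x/n*y + (-y/n)*x = 0" "x*(-y/n) + y*(x/n) = 0" by (auto simp: field_simps)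
  show "dmul a b d (felt (x/n) (-y/n)) (felt x y) = done_D"
       "dmul a b d (felt x y) (felt (x/n) (-y/n)) = done_D"
    unfolding felt_mult 1 2 by (simp_all add: done_D_def felt_def)
qed

lemma felt_unit:
  assumes "x^2 - of_nat dF * y^2 \<noteq> (0::'k::field_char_0)"
  shows "dmul a b (of_nat dF) (felt (x/(x^2 - of_nat dF * y^2)) (-y/(x^2 - of_nat dF * y^2))) (felt x y) = done_D"
        "dmul a b (of_nat dF) (felt x y) (felt (x/(x^2 - of_nat dF * y^2)) (-y/(x^2 - of_nat dF * y^2))) = done_D"
  using felt_unit_gen[OF refl assms] by auto

lemma Hsub_carrier: "Hsub dF \<subseteq> carrier (Hpre A B dF :: ('k::field_char_0 delt \<times> 'k) monoid)"
proof
  fix h assume "h \<in> (Hsub dF :: ('k delt \<times> 'k) set)"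
  then obtain x y :: 'k where h: "h = (felt x y, x^2 - of_nat dF * y^2)" "x^2 - of_nat dF * y^2 \<noteq> 0"
    by (auto simp: Hsub_def)
  show "h \<in> carrier (Hpre A B dF)"
    using h Dunits_I[OF felt_unit(2)[OF h(2)] felt_unit(1)[OF h(2)]] by (auto simp: Hpre_def Dgrp_def Gm_def)
qed

lemma normal_Hsub: "Hsub dF \<lhd> (Hpre A B dF :: ('k::field_char_0 delt \<times> 'k) monoid)"
proof -
  interpret G: group "Hpre A B dF :: ('k delt \<times> 'k) monoid" by (rule group_Hpre)
  have sg: "subgroup (Hsub dF) (Hpre A B dF :: ('k delt \<times> 'k) monoid)"
  proof (rule G.subgroupI)
    show "Hsub dF \<subseteq> carrier (Hpre A B dF :: ('k delt \<times> 'k) monoid)" by (rule Hsub_carrier)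
    show "(Hsub dF :: ('k delt \<times> 'k) set) \<noteq> {}"
      using Hsub_I[of 1 dF 0] by auto
  next
    fix h assume "h \<in> (Hsub dF :: ('k delt \<times> 'k) set)"
    then obtain x y :: 'k where h: "h = (felt x y, x^2 - of_nat dF * y^2)" and n: "x^2 - of_nat dF * y^2 \<noteq> 0"
      by (auto simp: Hsub_def)
    define n where "n = x^2 - of_nat dF * y^2"
    have nz: "n \<noteq> 0" using n n_def by simp
    let ?g = "(felt (x/n) (-y/n), 1/n) :: 'k delt \<times> 'k"
    have gH: "?g \<in> Hsub dF"
    proof -
      have "(x/n)^2 - of_nat dF * (-y/n)^2 = (x^2 - of_nat dF * y^2)/n^2"
        by (simp add: power_divide diff_divide_distrib)
      also have "\<dots> = 1/n" using nz unfolding n_def[symmetric] by (simp add: power2_eq_square)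
      finally have eq: "(x/n)^2 - of_nat dF * (-y/n)^2 = 1/n" .
      show ?thesis using Hsub_I[of "x/n" dF "-y/n", unfolded eq] nz by simp
    qed
    have hC: "h \<in> carrier (Hpre A B dF)" using Hsub_carrier \<open>h \<in> Hsub dF\<close> by blast
    have gC: "?g \<in> carrier (Hpre A B dF)" using Hsub_carrier gH by blast
    have prod: "?g \<otimes>\<^bsub>Hpre A B dF\<^esub> h = \<one>\<^bsub>Hpre A B dF\<^esub>"
      using felt_unit_gen[OF n_def[symmetric] nz] nz by (simp add: h Hpre_def Dgrp_def Gm_def n_def[symmetric])
    have "inv\<^bsub>Hpre A B dF\<^esub> h = ?g" by (rule G.inv_equality[OF prod hC gC])
    then show "inv\<^bsub>Hpre A B dF\<^esub> h \<in> Hsub dF" using gH by simp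
  next
    fix h g assume "h \<in> (Hsub dF :: ('k delt \<times> 'k) set)" "g \<in> (Hsub dF :: ('k delt \<times> 'k) set)"
    then obtain x y x' y' :: 'k where h: "h = (felt x y, x^2 - of_nat dF * y^2)" "x^2 - of_nat dF * y^2 \<noteq> 0"
      and g: "g = (felt x' y', x'^2 - of_nat dF * y'^2)" "x'^2 - of_nat dF * y'^2 \<noteq> 0"
      by (auto simp: Hsub_def)
    have e: "(x*x' + of_nat dF*y*y')^2 - of_nat dF * (x*y'+y*x')^2 = (x^2 - of_nat dF * y^2) * (x'^2 - of_nat dF * y'^2)"
      by (simp add: algebra_simps power2_eq_square)
    have "h \<otimes>\<^bsub>Hpre A B dF\<^esub> g = (felt (x*x' + of_nat dF*y*y') (x*y'+y*x'), (x^2 - of_nat dF * y^2) * (x'^2 - of_nat dF * y'^2))"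
      by (simp add: h g Hpre_def Dgrp_def Gm_def felt_mult)
    then show "h \<otimes>\<^bsub>Hpre A B dF\<^esub> g \<in> Hsub dF"
      using Hsub_I[of "x*x' + of_nat dF*y*y'" dF "x*y'+y*x'", unfolded e] h(2) g(2) by simp
  qed
  show ?thesis
  proof (rule G.normal_invI[OF sg])
    fix g h assume g: "g \<in> carrier (Hpre A B dF :: ('k delt \<times> 'k) monoid)" and h: "h \<in> (Hsub dF :: ('k delt \<times> 'k) set)"
    have hc: "h \<in> carrier (Hpre A B dF)" using h Hsub_carrier by blast
    have "g \<otimes>\<^bsub>Hpre A B dF\<^esub> h = h \<otimes>\<^bsub>Hpre A B dF\<^esub> g"
      using h by (cases g) (auto simp: Hsub_def Hpre_def Dgrp_def Gm_def felt_central)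
    then have "g \<otimes>\<^bsub>Hpre A B dF\<^esub> h \<otimes>\<^bsub>Hpre A B dF\<^esub> inv\<^bsub>Hpre A B dF\<^esub> g = h"
      using g hc by (simp add: G.m_assoc)
    then show "g \<otimes>\<^bsub>Hpre A B dF\<^esub> h \<otimes>\<^bsub>Hpre A B dF\<^esub> inv\<^bsub>Hpre A B dF\<^esub> g \<in> Hsub dF" using h by simp
  qed
qed




locale L =
  fixes A B :: rat and dF dM :: nat and mu :: "rat quat" and m1 m2 m3 :: rat
  assumes muQ: "mu = Q 0 m1 m2 m3"
    and R: "A*m1^2 + B*m2^2 - A*B*m3^2 = - of_nat dM"
    and Anz: "A \<noteq> 0" and Bnz: "B \<noteq> 0" and dFpos: "dF > 0" and dMpos: "dM > 0"
begin

lemma qmap_mu: "(qmap mu :: 'k::field_char_0 quat) = Q 0 (of_rat m1) (of_rat m2) (of_rat m3)"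
  by (simp add: muQ)

lemma Rk: "(of_rat A :: 'k::field_char_0) * (of_rat m1)^2 + of_rat B * (of_rat m2)^2
     - of_rat A * of_rat B * (of_rat m3)^2 = - of_nat dM"
proof -
  have "(of_rat (A*m1^2 + B*m2^2 - A*B*m3^2) :: 'k) = of_rat (- of_nat dM)" using R by simp
  then show ?thesis by (simp add: of_rat_add of_rat_diff of_rat_mult of_rat_power of_rat_minus)
qed

lemma knz: "\<not> ((of_rat m1 :: 'k::field_char_0) = 0 \<and> of_rat m2 = (0::'k) \<and> of_rat m3 = (0::'k))"
  using Rk[where 'k='k] dMpos by auto

lemma mult_E: "dmul (of_rat A) (of_rat B) (of_nat dF) (emk (qmap mu) x y z w) (emk (qmap mu) x' y' z' w') =
     emk (qmap mu) (x*x' - of_nat dM*y*y' + of_nat dF*(z*z' - of_nat dM*w*w')) (x*y'+y*x' + of_nat dF*(z*w'+w*z'))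
        (x*z' + z*x' - of_nat dM*(y*w'+w*y')) (x*w'+y*z'+z*y'+w*x')"
  for x y z w x' y' z' w' :: "'k::field_char_0"
  unfolding qmap_mu by (rule emk_mult[OF Rk])

lemma comm_E: "dmul (of_rat A) (of_rat B) (of_nat dF) (emk (qmap mu) x y z w) (emk (qmap mu) x' y' z' w') =
     dmul (of_rat A) (of_rat B) (of_nat dF) (emk (qmap mu) x' y' z' w') (emk (qmap mu) x y z w)"
  for x y z w x' y' z' w' :: "'k::field_char_0"
  unfolding qmap_mu by (rule emk_comm[OF Rk])

lemma inj_E: "emk (qmap mu) x y z w = emk (qmap mu) x' y' z' w' \<longleftrightarrow> x = x' \<and> y = y' \<and> z = z' \<and> w = w'"
  for x y z w x' y' z' w' :: "'k::field_char_0"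
  unfolding qmap_mu by (rule emk_inj[OF knz])

lemma dstar_E: "dstar (emk (qmap mu) x y z w) = emk (qmap mu) x (-y) z (-w)"
  and dbar_E: "dbar (emk (qmap mu) x y z w) = emk (qmap mu) x y (-z) (-w)"
  and dsmul_E: "dsmul c (emk (qmap mu) x y z w) = emk (qmap mu) (c*x) (c*y) (c*z) (c*w)"
  and felt_E: "felt u v = emk (qmap mu) u 0 v 0"
  and done_E: "done_D = emk (qmap mu) 1 0 0 0"
  for x y z w c u v :: "'k::field_char_0"
  unfolding qmap_mu by (rule dstar_emk dbar_emk dsmul_emk felt_emk done_emk)+

lemma NEK_E: "NEK A B dF (emk (qmap mu) x y z w) =
   emk (qmap mu) (x^2 + of_nat dM*y^2 - of_nat dF*(z^2+of_nat dM*w^2)) 0 0 (2*(x*w-y*z))"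
  for x y z w :: "'k::field_char_0"
  unfolding NEK_def qmap_mu by (rule NEK_emk[OF Rk])

lemma NEK_E_felt: "NEK A B dF (emk (qmap mu) x y z w) = felt t 0 \<longleftrightarrow>
   t = x^2 + of_nat dM*y^2 - of_nat dF*(z^2+of_nat dM*w^2) \<and> x*w = y*z"
  for x y z w t :: "'k::field_char_0"
  unfolding NEK_E felt_E inj_E by auto

lemma fnorm_E: "fnorm (of_nat dF) (dmul (of_rat A) (of_rat B) (of_nat dF) (emk (qmap mu) x y z w) (dstar (emk (qmap mu) x y z w)))
     = (x^2 + of_nat dM*y^2 - of_nat dF*(z^2+of_nat dM*w^2))^2 + 4*of_nat dF*of_nat dM*(x*w-y*z)^2"
  for x y z w :: "'k::field_char_0"
  unfolding qmap_mu by (rule fnorm_star_emk[OF Rk])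

lemma Eset_eq: "Eset dF mu = {emk (qmap mu) x y z w | x y z w. True}"
  by (simp add: Eset_def emk_def)

lemma NEK_mult: "NEK A B dF y = felt s 0 \<Longrightarrow>
   NEK A B dF (dmul (of_rat A) (of_rat B) (of_nat dF) x y) = dsmul s (NEK A B dF x)"
  unfolding NEK_def by (rule NEK_mult_scal)

lemma NEK_one: "NEK A B dF done_D = done_D"
  unfolding NEK_def by (simp add: done_D_def qscal_def dmul_one[unfolded done_D_def qscal_def])

lemma E0_char: "(e :: 'k::field_char_0 delt) \<in> E0units A B dF mu \<longleftrightarrow>
   e \<in> Eset dF mu \<and> (\<exists>t. t \<noteq> 0 \<and> NEK A B dF e = felt t 0)"
proof
  assume "e \<in> E0units A B dF mu" then show "e \<in> Eset dF mu \<and> (\<exists>t. t \<noteq> 0 \<and> NEK A B dF e = felt t 0)"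
    by (simp add: E0units_def)
next
  assume a: "e \<in> Eset dF mu \<and> (\<exists>t. t \<noteq> 0 \<and> NEK A B dF e = felt t 0)"
  then obtain x y z w t where e: "e = emk (qmap mu) x y z w" and t: "t \<noteq> 0" "NEK A B dF e = felt t 0"
    by (auto simp: Eset_eq)
  define e' where "e' = dsmul (inverse t) (dstar (dbar e))"
  have e'E: "e' = emk (qmap mu) (inverse t * x) (inverse t * - y) (inverse t * - z) (inverse t * w)"
    unfolding e'_def e dbar_E dstar_E dsmul_E by simp
  have 1: "dmul (of_rat A) (of_rat B) (of_nat dF) e e' = done_D"
    unfolding e'_def dsmul_mult2 using t by (simp add: NEK_def[symmetric] dsmul_felt done_D_def felt_def qscal_def)
  have 2: "dmul (of_rat A) (of_rat B) (of_nat dF) e' e = done_D"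
    using 1 unfolding e'E e comm_E .
  have "e' \<in> Eset dF mu" unfolding e'E Eset_eq by blast
  then show "e \<in> E0units A B dF mu" using a 1 2 unfolding E0units_def by blast
qed

end



context L begin

lemma E0_Eset: "e \<in> E0units A B dF mu \<Longrightarrow> \<exists>x y z w. e = emk (qmap mu) x y z w"
  by (auto simp: E0_char Eset_eq)

lemma E0_mult: assumes "e1 \<in> E0units A B dF mu" "e2 \<in> E0units A B dF mu"
  shows "dmul (of_rat A) (of_rat B) (of_nat dF) e1 e2 \<in> (E0units A B dF mu :: 'k::field_char_0 delt set)"
proof -
  obtain t1 t2 :: 'k where t: "t1 \<noteq> 0" "NEK A B dF e1 = felt t1 0" "t2 \<noteq> 0" "NEK A B dF e2 = felt t2 0"
    using assms by (auto simp: E0_char)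
  obtain x y z w x' y' z' w' where e: "e1 = emk (qmap mu) x y z w" "e2 = emk (qmap mu) x' y' z' w'"
    using E0_Eset[OF assms(1)] E0_Eset[OF assms(2)] by blast
  have "NEK A B dF (dmul (of_rat A) (of_rat B) (of_nat dF) e1 e2) = felt (t2*t1) 0"
    using NEK_mult[OF t(4)] t(2) by (simp add: dsmul_felt)
  moreover have "dmul (of_rat A) (of_rat B) (of_nat dF) e1 e2 \<in> Eset dF mu"
    unfolding e mult_E Eset_eq by blast
  ultimately show ?thesis using t by (auto simp: E0_char)
qed

lemma E0_NEK: "e \<in> E0units A B dF mu \<Longrightarrow> \<exists>t. t \<noteq> 0 \<and> NEK A B dF e = felt t 0"
  by (simp add: E0_char)

lemma E0_inv: assumes "(e :: 'k::field_char_0 delt) \<in> E0units A B dF mu"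
  shows "\<exists>e' \<in> E0units A B dF mu. dmul (of_rat A) (of_rat B) (of_nat dF) e' e = done_D
                 \<and> dmul (of_rat A) (of_rat B) (of_nat dF) e e' = done_D"
proof -
  obtain e' where e': "e' \<in> Eset dF mu" "dmul (of_rat A) (of_rat B) (of_nat dF) e e' = done_D"
                      "dmul (of_rat A) (of_rat B) (of_nat dF) e' e = done_D"
    using assms unfolding E0units_def by blast
  obtain t where t: "t \<noteq> 0" "NEK A B dF e = (felt t 0 :: 'k delt)" using assms E0_NEK by blast
  have "dsmul t (NEK A B dF e') = NEK A B dF done_D"
    using NEK_mult[OF t(2), of e'] e'(3) by simp
  then have "dsmul t (NEK A B dF e') = done_D" by (simp add: NEK_one)
  then have "dsmul (inverse t) (dsmul t (NEK A B dF e')) = dsmul (inverse t) done_D" by simp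
  then have "NEK A B dF e' = felt (inverse t) 0" using t(1) by (simp add: dsmul_dsmul dsmul_1 dsmul_done)
  then have "e' \<in> E0units A B dF mu" using e'(1) t(1) by (auto simp: E0_char)
  then show ?thesis using e' by blast
qed

lemma E0_Dunits: "e \<in> E0units A B dF mu \<Longrightarrow> (e :: 'k::field_char_0 delt) \<in> Dunits A B dF"
  using E0_inv[of e] Dunits_I[of A B dF e] by blast

lemma one_E0: "done_D \<in> (E0units A B dF mu :: 'k::field_char_0 delt set)"
proof -
  have "NEK A B dF (emk (qmap mu) 1 0 0 0) = (felt 1 0 :: 'k delt)" by (simp add: NEK_E_felt)
  then show ?thesis unfolding E0_char done_E Eset_eq by auto
qed

lemma comm_group_E0: "comm_group (E0grp A B dF mu :: 'k::field_char_0 delt monoid)"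
proof (rule comm_groupI)
  fix x y assume "x \<in> carrier (E0grp A B dF mu :: 'k delt monoid)" "y \<in> carrier (E0grp A B dF mu :: 'k delt monoid)"
  then show "x \<otimes>\<^bsub>E0grp A B dF mu\<^esub> y \<in> carrier (E0grp A B dF mu)"
    by (simp add: E0grp_def E0_mult)
next
  show "\<one>\<^bsub>E0grp A B dF mu\<^esub> \<in> carrier (E0grp A B dF mu :: 'k delt monoid)"
    by (simp add: E0grp_def one_E0)
next
  fix x y z show "x \<otimes>\<^bsub>E0grp A B dF mu\<^esub> y \<otimes>\<^bsub>E0grp A B dF mu\<^esub> z = x \<otimes>\<^bsub>E0grp A B dF mu\<^esub> (y \<otimes>\<^bsub>E0grp A B dF mu\<^esub> (z :: 'k delt))"
    by (simp add: E0grp_def dmul_assoc)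
next
  fix x y assume "x \<in> carrier (E0grp A B dF mu :: 'k delt monoid)" "y \<in> carrier (E0grp A B dF mu :: 'k delt monoid)"
  then have "x \<in> E0units A B dF mu" "y \<in> E0units A B dF mu" by (simp_all add: E0grp_def)
  then obtain a b c d a' b' c' d' where "x = emk (qmap mu) a b c d" "y = emk (qmap mu) a' b' c' d'"
    using E0_Eset[of x] E0_Eset[of y] by blast
  then show "x \<otimes>\<^bsub>E0grp A B dF mu\<^esub> y = y \<otimes>\<^bsub>E0grp A B dF mu\<^esub> x"
    by (simp add: E0grp_def comm_E)
next
  fix x show "\<one>\<^bsub>E0grp A B dF mu\<^esub> \<otimes>\<^bsub>E0grp A B dF mu\<^esub> x = (x :: 'k delt)"
    by (simp add: E0grp_def dmul_one)
next
  fix x assume "x \<in> carrier (E0grp A B dF mu :: 'k delt monoid)"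
  then show "\<exists>y\<in>carrier (E0grp A B dF mu). y \<otimes>\<^bsub>E0grp A B dF mu\<^esub> x = \<one>\<^bsub>E0grp A B dF mu\<^esub>"
    using E0_inv[of x] by (auto simp: E0grp_def)
qed

lemma Funits_I: "x^2 - of_nat dF * y^2 \<noteq> 0 \<Longrightarrow> felt x y \<in> Funits dF"
  unfolding Funits_def by blast

lemma Funits_E0: "Funits dF \<subseteq> (E0units A B dF mu :: 'k::field_char_0 delt set)"
proof
  fix f assume "f \<in> (Funits dF :: 'k delt set)"
  then obtain x y :: 'k where f: "f = felt x y" "x^2 - of_nat dF * y^2 \<noteq> 0" by (auto simp: Funits_def)
  have "NEK A B dF (emk (qmap mu) x 0 y 0) = felt (x^2 - of_nat dF * y^2) 0" by (simp add: NEK_E_felt)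
  then show "f \<in> E0units A B dF mu" using f unfolding E0_char felt_E Eset_eq by blast
qed

lemma NEK_felt: "NEK A B dF (felt x y) = (felt (x^2 - of_nat dF * y^2) 0 :: 'k::field_char_0 delt)"
  unfolding felt_E[of x y] by (simp add: NEK_E_felt)

lemma normal_Funits: "Funits dF \<lhd> (E0grp A B dF mu :: 'k::field_char_0 delt monoid)"
proof -
  interpret G: comm_group "E0grp A B dF mu :: 'k delt monoid" by (rule comm_group_E0)
  have "subgroup (Funits dF) (E0grp A B dF mu :: 'k delt monoid)"
  proof (rule G.subgroupI)
    show "Funits dF \<subseteq> carrier (E0grp A B dF mu :: 'k delt monoid)" using Funits_E0 by (simp add: E0grp_def)
    show "(Funits dF :: 'k delt set) \<noteq> {}" using Funits_I[of 1 0] by auto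
  next
    fix f assume "f \<in> (Funits dF :: 'k delt set)"
    then obtain x y :: 'k where f: "f = felt x y" "x^2 - of_nat dF * y^2 \<noteq> 0" by (auto simp: Funits_def)
    define n where "n = x^2 - of_nat dF * y^2"
    have nz: "n \<noteq> 0" using f n_def by simp
    have eq: "(x/n)^2 - of_nat dF * (-y/n)^2 = 1/n"
    proof -
      have "(x/n)^2 - of_nat dF * (-y/n)^2 = (x^2 - of_nat dF * y^2)/n^2"
        by (simp add: power_divide diff_divide_distrib)
      also have "\<dots> = 1/n" using nz unfolding n_def[symmetric] by (simp add: power2_eq_square)
      finally show ?thesis .
    qed
    have gF: "felt (x/n) (-y/n) \<in> Funits dF" using Funits_I[of "x/n" "-y/n", unfolded eq] nz by simp
    have "inv\<^bsub>E0grp A B dF mu\<^esub> f = felt (x/n) (-y/n)"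
      apply (rule G.inv_equality)
      using felt_unit_gen[OF n_def[symmetric] nz] gF \<open>f \<in> Funits dF\<close> Funits_E0 f
      by (auto simp: E0grp_def)
    then show "inv\<^bsub>E0grp A B dF mu\<^esub> f \<in> Funits dF" using gF by simp
  next
    fix f g assume "f \<in> (Funits dF :: 'k delt set)" "g \<in> (Funits dF :: 'k delt set)"
    then obtain x y x' y' :: 'k where h: "f = felt x y" "x^2 - of_nat dF * y^2 \<noteq> 0"
      and g: "g = felt x' y'" "x'^2 - of_nat dF * y'^2 \<noteq> 0"
      by (auto simp: Funits_def)
    have e: "(x*x' + of_nat dF*y*y')^2 - of_nat dF * (x*y'+y*x')^2 = (x^2 - of_nat dF * y^2) * (x'^2 - of_nat dF * y'^2)"
      by (simp add: algebra_simps power2_eq_square)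
    have "f \<otimes>\<^bsub>E0grp A B dF mu\<^esub> g = felt (x*x' + of_nat dF*y*y') (x*y'+y*x')"
      by (simp add: h g E0grp_def felt_mult)
    then show "f \<otimes>\<^bsub>E0grp A B dF mu\<^esub> g \<in> Funits dF"
      using Funits_I[of "x*x' + of_nat dF*y*y'" "x*y'+y*x'", unfolded e] h(2) g(2) by simp
  qed
  then show ?thesis by (rule G.subgroup_imp_normal)
qed

lemma iota_E: "\<exists>c c'. c' \<noteq> 0 \<and> (iota_delta dM dF mu :: 'k::field_char_0 delt) = emk (qmap mu) c 0 0 c'"
proof -
  have g: "gK dM dF \<noteq> 0" using dFpos by (simp add: gK_def)
  then have g': "(of_nat (gK dM dF) :: 'k) \<noteq> 0" by simp
  show ?thesis
  proof (cases "(- int (dK dM dF)) mod 4 = 1")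
    case True
    then have "(iota_delta dM dF mu :: 'k delt) = emk (qmap mu) (1/2) 0 0 (1/2 * inverse (of_nat (gK dM dF)))"
      unfolding iota_delta_def Let_def qmap_mu emk_Q by (simp add: qscal_def)
    then show ?thesis using g' by (intro exI conjI) auto
  next
    case False
    then have "(iota_delta dM dF mu :: 'k delt) = emk (qmap mu) 0 0 0 (inverse (of_nat (gK dM dF)))"
      unfolding iota_delta_def Let_def qmap_mu emk_Q by (simp add: qscal_def)
    then show ?thesis using g' by (intro exI conjI) auto
  qed
qed

end



context L begin

lemma te_prop: assumes "(e :: 'k::field_char_0 delt) \<in> E0units A B dF mu"
  shows "NEK A B dF e = felt (qcoef0 (fst (NEK A B dF e))) 0 \<and> qcoef0 (fst (NEK A B dF e)) \<noteq> 0"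
  using E0_NEK[OF assms] by (auto simp: felt_def qscal_def)

lemma Hz_cond:
  assumes h: "(h1 :: 'k::field_char_0 delt) \<in> Eset dF mu" and N: "NEK A B dF h1 = felt \<alpha> 0" and a: "\<alpha> \<noteq> 0"
  shows "nu A B dF (h1, \<alpha>) = 1 \<and> rho A B dF (h1, \<alpha>) done_D = done_D
         \<and> rho A B dF (h1, \<alpha>) (iota_delta dM dF mu) = iota_delta dM dF mu"
proof (intro conjI)
  obtain x y z w where h1: "h1 = emk (qmap mu) x y z w" using h by (auto simp: Eset_eq)
  have c: "\<alpha> = x^2 + of_nat dM*y^2 - of_nat dF*(z^2+of_nat dM*w^2)" "x*w = y*z"
    using N unfolding h1 NEK_E_felt by auto
  show "nu A B dF (h1, \<alpha>) = 1"
    using a unfolding nu.simps h1 fnorm_E c(2)[symmetric] c(1)[symmetric] by simp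
  show "rho A B dF (h1, \<alpha>) done_D = done_D"
    unfolding rho.simps dmul_one NEK_def[symmetric] N using a by (simp add: dsmul_felt done_D_def felt_def qscal_def)
  obtain c c' where i: "c' \<noteq> 0" "(iota_delta dM dF mu :: 'k delt) = emk (qmap mu) c 0 0 c'"
    using iota_E by blast
  let ?M = "dmul (of_rat A) (of_rat B) (of_nat dF) :: 'k delt \<Rightarrow> _"
  have "?M h1 (?M (iota_delta dM dF mu) (dstar (dbar h1)))
      = ?M (?M h1 (iota_delta dM dF mu)) (dstar (dbar h1))" by (simp add: dmul_assoc)
  also have "\<dots> = ?M (?M (iota_delta dM dF mu) h1) (dstar (dbar h1))"
    unfolding i(2) h1 comm_E ..
  also have "\<dots> = ?M (iota_delta dM dF mu) (felt \<alpha> 0)"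
    by (simp add: dmul_assoc NEK_def[symmetric] N)
  also have "\<dots> = dsmul \<alpha> (iota_delta dM dF mu)"
    by (simp add: felt_central[symmetric] felt0_mult)
  finally show "rho A B dF (h1, \<alpha>) (iota_delta dM dF mu) = iota_delta dM dF mu"
    using a by (simp add: dsmul_dsmul dsmul_1)
qed

lemma surj_cond:
  assumes aD: "(a :: 'k::field_char_0 delt) \<in> Dunits A B dF" and al: "\<alpha> \<noteq> 0"
    and r1: "rho A B dF (a, \<alpha>) done_D = done_D"
    and r2: "rho A B dF (a, \<alpha>) (iota_delta dM dF mu) = iota_delta dM dF mu"
  shows "a \<in> E0units A B dF mu \<and> NEK A B dF a = felt \<alpha> 0"
proof -
  let ?M = "dmul (of_rat A) (of_rat B) (of_nat dF) :: 'k delt \<Rightarrow> _"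
  let ?i = "iota_delta dM dF mu :: 'k delt"
  obtain a' where a': "?M a a' = done_D" "?M a' a = done_D" using aD by (auto simp: Dunits_def)
  have "dsmul \<alpha> (dsmul (inverse \<alpha>) (?M a (dstar (dbar a)))) = dsmul \<alpha> done_D"
    using r1 by (simp add: dmul_one)
  then have N: "?M a (dstar (dbar a)) = felt \<alpha> 0" using al by (simp add: dsmul_dsmul dsmul_1 dsmul_done)
  have "dsmul \<alpha> (dsmul (inverse \<alpha>) (?M a (?M ?i (dstar (dbar a))))) = dsmul \<alpha> ?i"
    using r2 by simp
  then have r2': "?M a (?M ?i (dstar (dbar a))) = dsmul \<alpha> ?i" using al by (simp add: dsmul_dsmul dsmul_1)
  have "dstar (dbar a) = ?M (?M a' a) (dstar (dbar a))" by (simp add: a' dmul_one)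
  also have "\<dots> = ?M a' (felt \<alpha> 0)" by (simp add: dmul_assoc N)
  also have "\<dots> = dsmul \<alpha> a'" by (simp add: felt_central[symmetric] felt0_mult)
  finally have bs: "dstar (dbar a) = dsmul \<alpha> a'" .
  have "dsmul \<alpha> (?M a (?M ?i a')) = dsmul \<alpha> ?i" using r2' unfolding bs dsmul_mult2 .
  then have "dsmul (inverse \<alpha>) (dsmul \<alpha> (?M a (?M ?i a'))) = dsmul (inverse \<alpha>) (dsmul \<alpha> ?i)" by simp
  then have c1: "?M a (?M ?i a') = ?i" using al by (simp add: dsmul_dsmul dsmul_1)
  have "?M a ?i = ?M (?M a (?M ?i a')) a" by (simp add: dmul_assoc a' dmul_one)
  then have comm: "?M a ?i = ?M ?i a" unfolding c1 .
  obtain c c' where i: "c' \<noteq> 0" "?i = emk (qmap mu) c 0 0 c'" using iota_E by blast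
  have "\<exists>x0 y0 z0 w0. a = emk (Q 0 (of_rat m1) (of_rat m2) (of_rat m3)) x0 y0 z0 w0"
    apply (rule centr[OF _ _ _ i(1) knz])
    using Anz Bnz dFpos comm unfolding i(2) qmap_mu by auto
  then have aE: "a \<in> Eset dF mu" unfolding Eset_eq qmap_mu by auto
  show ?thesis using aE N al by (auto simp: E0_char NEK_def)
qed

end



context L begin

theorem main:
  "(\<lambda>X. the_elem (phiH A B dF ` X))
     \<in> iso (E0grp A B dF mu Mod (Funits dF :: 'k::field_char_0 delt set)) (Hzgrp A B dF dM mu)"
proof -
  let ?G = "E0grp A B dF mu :: 'k delt monoid"
  let ?H = "Funits dF :: 'k delt set"
  let ?P = "Hpre A B dF :: ('k delt \<times> 'k) monoid"
  let ?S = "Hsub dF :: ('k delt \<times> 'k) set"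
  let ?M = "dmul (of_rat A) (of_rat B) (of_nat dF) :: 'k delt \<Rightarrow> _"
  let ?te = "\<lambda>e :: 'k delt. qcoef0 (fst (NEK A B dF e))"
  let ?phi = "\<lambda>X. the_elem (phiH A B dF ` X) :: ('k delt \<times> 'k) set"
  interpret E: comm_group ?G by (rule comm_group_E0)
  interpret EN: normal ?H ?G by (rule normal_Funits)
  interpret P: group ?P by (rule group_Hpre)
  interpret PN: normal ?S ?P by (rule normal_Hsub)
  have sgH: "subgroup ?H ?G" by (rule EN.subgroup_axioms)
  have sgS: "subgroup ?S ?P" by (rule PN.subgroup_axioms)
  have cG: "carrier ?G = E0units A B dF mu" by (simp add: E0grp_def)
  have mG: "\<And>x y. x \<otimes>\<^bsub>?G\<^esub> y = ?M x y" by (simp add: E0grp_def)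
  have carrP: "\<And>e :: 'k delt. e \<in> E0units A B dF mu \<Longrightarrow> (e, ?te e) \<in> carrier ?P"
    using te_prop E0_Dunits by (auto simp: Hpre_def Dgrp_def Gm_def)
  have phiH_eq: "\<And>e :: 'k delt. phiH A B dF e = ?S #>\<^bsub>?P\<^esub> (e, ?te e)" by (simp add: phiH_def)
  have Sdesc: "\<And>s. s \<in> ?S \<Longrightarrow> \<exists>x y. s = (felt x y, x^2 - of_nat dF * y^2) \<and> x^2 - of_nat dF * y^2 \<noteq> 0"
    by (auto simp: Hsub_def)
  have NEKfe: "\<And>(e :: 'k delt) (f :: 'k delt) (n :: 'k). e \<in> E0units A B dF mu \<Longrightarrow> NEK A B dF f = felt n 0 \<Longrightarrow>
      NEK A B dF (?M f e) = felt (?te e * n) 0"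
  proof -
    fix e f :: "'k delt" and n :: 'k assume e: "e \<in> E0units A B dF mu" and f: "NEK A B dF f = felt n 0"
    have "NEK A B dF e = felt (?te e) 0" using te_prop[OF e] by blast
    from NEK_mult[OF this, of f] show "NEK A B dF (?M f e) = felt (?te e * n) 0" by (simp add: f dsmul_felt)
  qed
  have tefe: "\<And>(e :: 'k delt) (f :: 'k delt) (n :: 'k). e \<in> E0units A B dF mu \<Longrightarrow> NEK A B dF f = felt n 0 \<Longrightarrow> ?te (?M f e) = ?te e * n"
    using NEKfe by (simp add: felt_def qscal_def)
  have K: "\<And>e :: 'k delt. e \<in> E0units A B dF mu \<Longrightarrow> ?phi (?H #>\<^bsub>?G\<^esub> e) = phiH A B dF e"
  proof -
    fix e :: "'k delt" assume e: "e \<in> E0units A B dF mu"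
    have "phiH A B dF ` (?H #>\<^bsub>?G\<^esub> e) = {phiH A B dF e}"
    proof
      show "phiH A B dF ` (?H #>\<^bsub>?G\<^esub> e) \<subseteq> {phiH A B dF e}"
      proof
        fix C assume "C \<in> phiH A B dF ` (?H #>\<^bsub>?G\<^esub> e)"
        then obtain f where f: "f \<in> ?H" "C = phiH A B dF (?M f e)"
          by (auto simp: r_coset_def mG)
        obtain x y where fx: "f = felt x y" "x^2 - of_nat dF * y^2 \<noteq> 0" using f(1) by (auto simp: Funits_def)
        let ?n = "x^2 - of_nat dF * y^2"
        have t: "?te (?M f e) = ?te e * ?n" using tefe[OF e NEK_felt[of x y]] fx(1) by simp
        have sS: "(f, ?n) \<in> ?S" using Hsub_I[OF fx(2)] fx(1) by simp
        have "(f, ?n) \<otimes>\<^bsub>?P\<^esub> (e, ?te e) = (?M f e, ?te (?M f e))"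
          using t by (simp add: Hpre_def Dgrp_def Gm_def mult.commute)
        moreover have "(f, ?n) \<otimes>\<^bsub>?P\<^esub> (e, ?te e) \<in> ?S #>\<^bsub>?P\<^esub> (e, ?te e)"
          by (rule P.rcosI[OF sS PN.subset carrP[OF e]])
        ultimately have "?S #>\<^bsub>?P\<^esub> (e, ?te e) = ?S #>\<^bsub>?P\<^esub> (?M f e, ?te (?M f e))"
          using P.repr_independence[OF _ carrP[OF e] sgS] by simp
        then show "C \<in> {phiH A B dF e}" using f(2) phiH_eq by simp
      qed
    next
      have "e \<in> ?H #>\<^bsub>?G\<^esub> e" using E.rcos_self[OF _ sgH] e cG by simp
      then show "{phiH A B dF e} \<subseteq> phiH A B dF ` (?H #>\<^bsub>?G\<^esub> e)" by blast
    qed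
    then show "?phi (?H #>\<^bsub>?G\<^esub> e) = phiH A B dF e" by simp
  qed
  have carrQ: "\<And>(X :: 'k delt set). X \<in> carrier (?G Mod ?H) \<longleftrightarrow> (\<exists>e \<in> E0units A B dF mu. X = ?H #>\<^bsub>?G\<^esub> e)"
    by (auto simp: FactGroup_def RCOSETS_def cG)
  have cHz: "carrier (Hzgrp A B dF dM mu :: ('k delt \<times> 'k) set monoid) = Hz A B dF dM mu"
    by (simp add: Hzgrp_def)
  have mHz: "\<And>X Y. X \<otimes>\<^bsub>Hzgrp A B dF dM mu\<^esub> Y = X <#>\<^bsub>?P\<^esub> Y"
    by (simp add: Hzgrp_def Hgrp_def FactGroup_def)
  have cHg: "carrier (Hgrp A B dF :: ('k delt \<times> 'k) set monoid) = rcosets\<^bsub>?P\<^esub> ?S"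
    by (simp add: Hgrp_def FactGroup_def)
  have inHz: "\<And>e :: 'k delt. e \<in> E0units A B dF mu \<Longrightarrow> phiH A B dF e \<in> Hz A B dF dM mu"
  proof -
    fix e :: "'k delt" assume e: "e \<in> E0units A B dF mu"
    have "phiH A B dF e \<in> carrier (Hgrp A B dF)"
      unfolding cHg phiH_eq by (rule P.rcosetsI[OF PN.subset carrP[OF e]])
    moreover have "\<forall>h\<in>phiH A B dF e. nu A B dF h = 1 \<and> rho A B dF h done_D = done_D
             \<and> rho A B dF h (iota_delta dM dF mu) = iota_delta dM dF mu"
    proof
      fix h assume "h \<in> phiH A B dF e"
      then obtain s where s: "s \<in> ?S" "h = s \<otimes>\<^bsub>?P\<^esub> (e, ?te e)" by (auto simp: phiH_eq r_coset_def)
      obtain x y where sx: "s = (felt x y, x^2 - of_nat dF * y^2)" "x^2 - of_nat dF * y^2 \<noteq> 0"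
        using Sdesc[OF s(1)] by blast
      let ?n = "x^2 - of_nat dF * y^2"
      have h: "h = (?M (felt x y) e, ?n * ?te e)" using s(2) sx by (simp add: Hpre_def Dgrp_def Gm_def)
      have mem: "?M (felt x y) e \<in> E0units A B dF mu"
        using E0_mult[OF subsetD[OF Funits_E0 Funits_I[OF sx(2)]] e] .
      have N: "NEK A B dF (?M (felt x y) e) = felt (?n * ?te e) 0"
        using NEKfe[OF e NEK_felt] by (simp add: mult.commute)
      have nz: "?n * ?te e \<noteq> 0" using sx(2) te_prop[OF e] by simp
      show "nu A B dF h = 1 \<and> rho A B dF h done_D = done_D
             \<and> rho A B dF h (iota_delta dM dF mu) = iota_delta dM dF mu"
        unfolding h by (rule Hz_cond[OF _ N nz]) (use mem in \<open>simp add: E0_char\<close>)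
    qed
    ultimately show "phiH A B dF e \<in> Hz A B dF dM mu" unfolding Hz_def by blast
  qed
  show ?thesis
    unfolding iso_def hom_def bij_betw_def
  proof (intro CollectI conjI)
    show "?phi \<in> carrier (?G Mod ?H) \<rightarrow> carrier (Hzgrp A B dF dM mu)"
    proof
      fix X assume "X \<in> carrier (?G Mod ?H)"
      then obtain e where e: "e \<in> E0units A B dF mu" "X = ?H #>\<^bsub>?G\<^esub> e" using carrQ by blast
      show "?phi X \<in> carrier (Hzgrp A B dF dM mu)" using K[OF e(1)] inHz[OF e(1)] e(2) cHz by simp
    qed
  next
    show "\<forall>X\<in>carrier (?G Mod ?H). \<forall>Y\<in>carrier (?G Mod ?H).
        ?phi (X \<otimes>\<^bsub>?G Mod ?H\<^esub> Y) = ?phi X \<otimes>\<^bsub>Hzgrp A B dF dM mu\<^esub> ?phi Y"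
    proof (intro ballI)
      fix X Y assume "X \<in> carrier (?G Mod ?H)" "Y \<in> carrier (?G Mod ?H)"
      then obtain e1 e2 where e: "e1 \<in> E0units A B dF mu" "X = ?H #>\<^bsub>?G\<^esub> e1"
          "e2 \<in> E0units A B dF mu" "Y = ?H #>\<^bsub>?G\<^esub> e2" using carrQ by meson
      have XY: "X \<otimes>\<^bsub>?G Mod ?H\<^esub> Y = ?H #>\<^bsub>?G\<^esub> (?M e1 e2)"
        using EN.rcos_sum[of e1 e2] e cG by (simp add: FactGroup_def mG)
      have m12: "?M e1 e2 \<in> E0units A B dF mu" by (rule E0_mult[OF e(1) e(3)])
      have t12: "?te (?M e1 e2) = ?te e2 * ?te e1"
        using tefe[OF e(3), of e1 "?te e1"] te_prop[OF e(1)] by simp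
      have "phiH A B dF e1 <#>\<^bsub>?P\<^esub> phiH A B dF e2 = ?S #>\<^bsub>?P\<^esub> ((e1, ?te e1) \<otimes>\<^bsub>?P\<^esub> (e2, ?te e2))"
        unfolding phiH_eq by (rule PN.rcos_sum[OF carrP[OF e(1)] carrP[OF e(3)]])
      also have "\<dots> = phiH A B dF (?M e1 e2)"
        unfolding phiH_eq t12 by (simp add: Hpre_def Dgrp_def Gm_def mult.commute)
      finally have 1: "phiH A B dF e1 <#>\<^bsub>?P\<^esub> phiH A B dF e2 = phiH A B dF (?M e1 e2)" .
      have 2: "?phi (X \<otimes>\<^bsub>?G Mod ?H\<^esub> Y) = phiH A B dF (?M e1 e2)" unfolding XY by (rule K[OF m12])
      have 3: "?phi X \<otimes>\<^bsub>Hzgrp A B dF dM mu\<^esub> ?phi Y = phiH A B dF e1 <#>\<^bsub>?P\<^esub> phiH A B dF e2"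
        unfolding mHz e(2,4) K[OF e(1)] K[OF e(3)] ..
      show "?phi (X \<otimes>\<^bsub>?G Mod ?H\<^esub> Y) = ?phi X \<otimes>\<^bsub>Hzgrp A B dF dM mu\<^esub> ?phi Y"
        unfolding 2 3 1 ..
    qed
  next
    show "inj_on ?phi (carrier (?G Mod ?H))"
    proof (rule inj_onI)
      fix X Y assume "X \<in> carrier (?G Mod ?H)" "Y \<in> carrier (?G Mod ?H)" and eq: "?phi X = ?phi Y"
      then obtain e1 e2 where e: "e1 \<in> E0units A B dF mu" "X = ?H #>\<^bsub>?G\<^esub> e1"
          "e2 \<in> E0units A B dF mu" "Y = ?H #>\<^bsub>?G\<^esub> e2" using carrQ by meson
      have "phiH A B dF e1 = phiH A B dF e2" using eq unfolding e(2,4) K[OF e(1)] K[OF e(3)] .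
      then have "?S #>\<^bsub>?P\<^esub> (e1, ?te e1) = ?S #>\<^bsub>?P\<^esub> (e2, ?te e2)" unfolding phiH_eq .
      moreover have "(e1, ?te e1) \<in> ?S #>\<^bsub>?P\<^esub> (e1, ?te e1)" by (rule P.rcos_self[OF carrP[OF e(1)] sgS])
      ultimately have "(e1, ?te e1) \<in> ?S #>\<^bsub>?P\<^esub> (e2, ?te e2)" by simp
      then obtain s where s: "s \<in> ?S" "(e1, ?te e1) = s \<otimes>\<^bsub>?P\<^esub> (e2, ?te e2)" by (auto simp: r_coset_def)
      obtain x y where sx: "s = (felt x y, x^2 - of_nat dF * y^2)" "x^2 - of_nat dF * y^2 \<noteq> 0"
        using Sdesc[OF s(1)] by blast
      have e1: "e1 = ?M (felt x y) e2" using s(2) sx by (simp add: Hpre_def Dgrp_def Gm_def)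
      have "e1 \<in> ?H #>\<^bsub>?G\<^esub> e2"
        unfolding e1 mG[symmetric] by (rule E.rcosI[OF Funits_I[OF sx(2)] EN.subset]) (simp add: cG e(3))
      then have "?H #>\<^bsub>?G\<^esub> e2 = ?H #>\<^bsub>?G\<^esub> e1" using E.repr_independence[OF _ _ sgH] e(3) cG by simp
      then show "X = Y" using e(2,4) by simp
    qed
  next
    show "?phi ` carrier (?G Mod ?H) = carrier (Hzgrp A B dF dM mu)"
    proof
      show "?phi ` carrier (?G Mod ?H) \<subseteq> carrier (Hzgrp A B dF dM mu)"
      proof
        fix C assume "C \<in> ?phi ` carrier (?G Mod ?H)"
        then obtain X where X: "X \<in> carrier (?G Mod ?H)" "C = ?phi X" by blast
        then obtain e where e: "e \<in> E0units A B dF mu" "X = ?H #>\<^bsub>?G\<^esub> e" using carrQ by blast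
        show "C \<in> carrier (Hzgrp A B dF dM mu)" using K[OF e(1)] inHz[OF e(1)] e(2) X(2) cHz by simp
      qed
    next
      show "carrier (Hzgrp A B dF dM mu) \<subseteq> ?phi ` carrier (?G Mod ?H)"
      proof
        fix C :: "('k delt \<times> 'k) set" assume "C \<in> carrier (Hzgrp A B dF dM mu)"
        then have C: "C \<in> Hz A B dF dM mu" using cHz by simp
        then have "C \<in> rcosets\<^bsub>?P\<^esub> ?S" unfolding Hz_def cHg by blast
        then obtain g where g: "g \<in> carrier ?P" "C = ?S #>\<^bsub>?P\<^esub> g" by (auto simp: RCOSETS_def)
        obtain a \<alpha> where ga: "g = (a, \<alpha>)" by (cases g)
        have aD: "a \<in> Dunits A B dF" "\<alpha> \<noteq> 0" using g(1) ga by (auto simp: Hpre_def Dgrp_def Gm_def)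
        have "g \<in> C" using P.rcos_self[OF g(1) sgS] g(2) by simp
        then have cond: "rho A B dF (a, \<alpha>) done_D = done_D"
           "rho A B dF (a, \<alpha>) (iota_delta dM dF mu) = iota_delta dM dF mu"
          using C ga unfolding Hz_def by auto
        have aE: "a \<in> E0units A B dF mu" and Na: "NEK A B dF a = felt \<alpha> 0"
          using surj_cond[OF aD cond] by auto
        have "?te a = \<alpha>" using Na by (simp add: felt_def qscal_def)
        then have "?phi (?H #>\<^bsub>?G\<^esub> a) = C" using K[OF aE] g(2) ga phiH_eq by simp
        moreover have "?H #>\<^bsub>?G\<^esub> a \<in> carrier (?G Mod ?H)" using carrQ aE by blast
        ultimately show "C \<in> ?phi ` carrier (?G Mod ?H)" by blast
      qed
    qed
  qed
qed

end


theorem lemma4p1: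
  fixes A B :: rat and dF dM :: nat and mu :: "rat quat"
  assumes definite: "A < 0" "B < 0"
    and dF: "dF > 0" "squarefree dF"
    and dM: "dM > 0" "squarefree dM"
    and iota: "qmul A B mu mu = qscal (- of_nat dM)"
  shows "(\<lambda>X. the_elem (phiH A B dF ` X))
           \<in> iso (E0grp A B dF mu Mod (Funits dF :: 'k::field_char_0 delt set))
                 (Hzgrp A B dF dM mu)"
proof -
  obtain x0 x1 x2 x3 where mu: "mu = Q x0 x1 x2 x3" by (cases mu)
  from iota have e: "x0*x0 + A*x1*x1 + B*x2*x2 - A*B*x3*x3 = - of_nat dM"
    "x0*x1 + x1*x0 - B*x2*x3 + B*x3*x2 = 0"
    "x0*x2 + x2*x0 + A*x1*x3 - A*x3*x1 = 0"
    "x0*x3 + x3*x0 + x1*x2 - x2*x1 = 0"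
    by (simp_all add: mu qscal_def)
  have x0: "x0 = 0"
  proof (rule ccontr)
    assume nz: "x0 \<noteq> 0"
    then have "x1 = 0" "x2 = 0" "x3 = 0" using e(2-4) by auto
    then have "x0*x0 = - of_nat dM" using e(1) by simp
    moreover have "x0*x0 \<ge> 0" by simp
    ultimately show False using dM(1) by simp
  qed
  interpret L A B dF dM mu x1 x2 x3
  proof
    show "mu = Q 0 x1 x2 x3" using mu x0 by simp
    show "A*x1^2 + B*x2^2 - A*B*x3^2 = - of_nat dM" using e(1) x0 by (simp add: power2_eq_square algebra_simps)
  qed (use definite dF dM in auto)
  show ?thesis by (rule main)
qed

end
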